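(* Let $L$ be a $\kappa$-frame. The map $\nabla_\bullet\colon \mathfrak{H}_\kappa L \to \mathbb{C} L$, $I \mapsto \nabla_I$, is an injective frame homomorphism.
   Context: $\kappa$ is a fixed regular cardinal; a $\kappa$-set is a set of cardinality $<\kappa$. A $\kappa$-frame is a bounded distributive lattice having joins of all $\kappa$-subsets and satisfying $x\wedge\bigvee S=\bigvee_{s\in S}(x\wedge s)$ for $\kappa$-subsets $S$. A $\kappa$-ideal of $L$ is a downset $I\subseteq L$ such that every $\kappa$-subset of $I$ has an upper bound in $I$; $\mathfrak{H}_\kappa L$ is the frame of $\kappa$-ideals of $L$ ordered by inclusion. A congruence on $L$ is an equivalence relation on $L$ which is also a sub-$\kappa$-frame of $L\times L$; $\mathbb{C}L$ denotes the frame of congruences ordered by inclusion. For $a\in L$, $\nabla_a=\{(x,y)\mid x\vee a=y\vee a\}$ (the congruence generated by $(0,a)$), and for a $\kappa$-ideal $I$, $\nabla_I=\bigvee_{a\in I}\nabla_a$ in $\mathbb{C}L$. *)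

theory Defs
  imports Main
begin

text \<open>kappa is represented by a cardinal order relation k (on some type 'b).
  A kappa-set is a set S with card_of S strictly below k.\<close>

definition kset :: "'b rel \<Rightarrow> 'a set \<Rightarrow> bool" where
  "kset k S \<longleftrightarrow> (card_of S, k) \<in> ordLess"

definition regular_cardinal :: "'b rel \<Rightarrow> bool" where
  "regular_cardinal k \<longleftrightarrow> Cinfinite k \<and> regularCard k"

definition is_lub :: "'a::order set \<Rightarrow> 'a \<Rightarrow> bool" where
  "is_lub S x \<longleftrightarrow> (\<forall>s\<in>S. s \<le> x) \<and> (\<forall>y. (\<forall>s\<in>S. s \<le> y) \<longrightarrow> x \<le> y)"

definition kappa_frame :: "'b rel \<Rightarrow> 'a::{bounded_lattice,distrib_lattice} itself \<Rightarrow> bool" where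
  "kappa_frame k _ \<longleftrightarrow>
     (\<forall>S::'a set. kset k S \<longrightarrow> (\<exists>s. is_lub S s)) \<and>
     (\<forall>(S::'a set) x s. kset k S \<longrightarrow> is_lub S s \<longrightarrow> is_lub ((\<lambda>t. inf x t) ` S) (inf x s))"

definition kideals :: "'b rel \<Rightarrow> ('a::order) set set" where
  "kideals k = {I. (\<forall>x y. y \<in> I \<longrightarrow> x \<le> y \<longrightarrow> x \<in> I) \<and>
                   (\<forall>S. S \<subseteq> I \<longrightarrow> kset k S \<longrightarrow> (\<exists>u\<in>I. \<forall>s\<in>S. s \<le> u))}"

text \<open>Congruences: equivalence relations that are sub-kappa-frames of L x L
  (contain top and bottom, closed under binary meets and under kappa-joins,
  joins in L x L being computed componentwise).\<close>
definition congs :: "'b rel \<Rightarrow> ('a::bounded_lattice \<times> 'a) set set" where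
  "congs k = {C. equiv UNIV C \<and> (bot, bot) \<in> C \<and> (top, top) \<in> C \<and>
                 (\<forall>p\<in>C. \<forall>q\<in>C. (inf (fst p) (fst q), inf (snd p) (snd q)) \<in> C) \<and>
                 (\<forall>S x y. S \<subseteq> C \<longrightarrow> kset k S \<longrightarrow> is_lub (fst ` S) x \<longrightarrow> is_lub (snd ` S) y
                      \<longrightarrow> (x, y) \<in> C)}"

definition is_lub_in :: "'c set set \<Rightarrow> 'c set set \<Rightarrow> 'c set \<Rightarrow> bool" where
  "is_lub_in F S X \<longleftrightarrow> X \<in> F \<and> (\<forall>Y\<in>S. Y \<subseteq> X) \<and> (\<forall>Z\<in>F. (\<forall>Y\<in>S. Y \<subseteq> Z) \<longrightarrow> X \<subseteq> Z)"

definition is_glb_in :: "'c set set \<Rightarrow> 'c set set \<Rightarrow> 'c set \<Rightarrow> bool" where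
  "is_glb_in F S X \<longleftrightarrow> X \<in> F \<and> (\<forall>Y\<in>S. X \<subseteq> Y) \<and> (\<forall>Z\<in>F. (\<forall>Y\<in>S. Z \<subseteq> Y) \<longrightarrow> Z \<subseteq> X)"

definition lub_in :: "'c set set \<Rightarrow> 'c set set \<Rightarrow> 'c set" where
  "lub_in F S = (THE X. is_lub_in F S X)"

definition frame_hom :: "'c set set \<Rightarrow> 'd set set \<Rightarrow> ('c set \<Rightarrow> 'd set) \<Rightarrow> bool" where
  "frame_hom F G h \<longleftrightarrow>
     (\<forall>X\<in>F. h X \<in> G) \<and>
     (\<forall>S J. S \<subseteq> F \<longrightarrow> is_lub_in F S J \<longrightarrow> is_lub_in G (h ` S) (h J)) \<and>
     (\<forall>X\<in>F. \<forall>Y\<in>F. \<forall>M. is_glb_in F {X, Y} M \<longrightarrow> is_glb_in G {h X, h Y} (h M)) \<and>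
     (\<forall>T. is_glb_in F {} T \<longrightarrow> is_glb_in G {} (h T))"

definition nabla :: "'a::lattice \<Rightarrow> ('a \<times> 'a) set" where
  "nabla a = {(x, y). sup x a = sup y a}"

definition nablaI :: "'b rel \<Rightarrow> 'a::bounded_lattice set \<Rightarrow> ('a \<times> 'a) set" where
  "nablaI k I = lub_in (congs k) (nabla ` I)"

end

theory Submission
  imports Defs
begin

lemma finite_kset:
  assumes "Cinfinite k" "finite S" shows "kset k S"
proof -
  have "Cfinite (card_of S)" using assms(2) by (simp add: cfinite_def Field_card_of card_of_card_order_on)
  then show ?thesis unfolding kset_def using Cfinite_ordLess_Cinfinite assms(1) by blast
qed

lemma kset_image: "kset k S \<Longrightarrow> kset k (f ` S)"
  unfolding kset_def using card_of_image ordLeq_ordLess_trans by blast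

definition CI :: "'a::lattice set \<Rightarrow> ('a \<times> 'a) set" where
  "CI I = {(x, y). \<exists>a\<in>I. sup x a = sup y a}"

lemma kideal_down: "I \<in> kideals k \<Longrightarrow> y \<in> I \<Longrightarrow> x \<le> y \<Longrightarrow> x \<in> I"
  unfolding kideals_def by blast

lemma kideal_ub: "I \<in> kideals k \<Longrightarrow> S \<subseteq> I \<Longrightarrow> kset k S \<Longrightarrow> \<exists>u\<in>I. \<forall>s\<in>S. s \<le> u"
  unfolding kideals_def by blast

lemma kideal_bot:
  assumes "I \<in> kideals k" "Cinfinite k" shows "(bot::'a::bounded_lattice) \<in> I"
proof -
  obtain u where "u \<in> I" using kideal_ub[OF assms(1), of "{}"] finite_kset[OF assms(2)] by auto
  then show ?thesis using kideal_down[OF assms(1)] by auto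
qed

lemma kideal_sup:
  fixes a b :: "'a::bounded_lattice"
  assumes "I \<in> kideals k" "Cinfinite k" "a \<in> I" "b \<in> I" shows "sup a b \<in> I"
proof -
  obtain u where "u \<in> I" "a \<le> u" "b \<le> u"
    using kideal_ub[OF assms(1), of "{a,b}"] finite_kset[OF assms(2), of "{a,b}"] assms by auto
  then have "sup a b \<le> u" by simp
  then show ?thesis by (rule kideal_down[OF assms(1) \<open>u \<in> I\<close>])
qed

lemma CI_congs:
  fixes I :: "'a::{bounded_lattice,distrib_lattice} set"
  assumes I: "I \<in> kideals k" and C: "Cinfinite k"
  shows "CI I \<in> congs k"
proof -
  have bI: "bot \<in> I" using kideal_bot[OF I C] .
  have refl: "refl (CI I)" unfolding refl_on_def CI_def using bI by auto
  have sym: "sym (CI I)"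
  proof (rule symI)
    fix x y assume "(x, y) \<in> CI I"
    then obtain a where a: "a \<in> I" "sup x a = sup y a" unfolding CI_def by auto
    then have "sup y a = sup x a" by simp
    then show "(y, x) \<in> CI I" unfolding CI_def using a(1) by blast
  qed
  have trans: "trans (CI I)" unfolding trans_def CI_def
  proof (clarsimp)
    fix x y z a b assume a: "a \<in> I" "sup x a = sup y a" and b: "b \<in> I" "sup y b = sup z b"
    have "sup x (sup a b) = sup (sup x a) b" by (simp add: sup_aci)
    also have "\<dots> = sup (sup y a) b" using a by simp
    also have "\<dots> = sup (sup y b) a" by (simp add: sup_aci)
    also have "\<dots> = sup (sup z b) a" using b by simp
    also have "\<dots> = sup z (sup a b)" by (simp add: sup_aci)
    finally show "\<exists>c\<in>I. sup x c = sup z c" using kideal_sup[OF I C a(1) b(1)] by blast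
  qed
  have meet: "\<forall>p\<in>CI I. \<forall>q\<in>CI I. (inf (fst p) (fst q), inf (snd p) (snd q)) \<in> CI I"
    unfolding CI_def
  proof (clarsimp)
    fix x y x' y' a b assume a: "a \<in> I" "sup x a = sup y a" and b: "b \<in> I" "sup x' b = sup y' b"
    have e1: "sup x (sup a b) = sup y (sup a b)"
    proof -
      have "sup x (sup a b) = sup (sup x a) b" by (simp add: sup_aci)
      also have "\<dots> = sup (sup y a) b" using a by simp
      also have "\<dots> = sup y (sup a b)" by (simp add: sup_aci)
      finally show ?thesis .
    qed
    have e2: "sup x' (sup a b) = sup y' (sup a b)"
    proof -
      have "sup x' (sup a b) = sup (sup x' b) a" by (simp add: sup_aci)
      also have "\<dots> = sup (sup y' b) a" using b by simp
      also have "\<dots> = sup y' (sup a b)" by (simp add: sup_aci)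
      finally show ?thesis .
    qed
    have "sup (inf x x') (sup a b) = inf (sup x (sup a b)) (sup x' (sup a b))"
      by (simp add: sup_inf_distrib2)
    also have "\<dots> = sup (inf y y') (sup a b)" using e1 e2 by (simp add: sup_inf_distrib2)
    finally show "\<exists>c\<in>I. sup (inf x x') c = sup (inf y y') c" using kideal_sup[OF I C a(1) b(1)] by blast
  qed
  have joins: "\<forall>S x y. S \<subseteq> CI I \<longrightarrow> kset k S \<longrightarrow> is_lub (fst ` S) x \<longrightarrow> is_lub (snd ` S) y
                      \<longrightarrow> (x, y) \<in> CI I"
  proof (intro allI impI)
    fix S x y assume S: "S \<subseteq> CI I" "kset k S" and lx: "is_lub (fst ` S) x" and ly: "is_lub (snd ` S) y"
    define f where "f p = (SOME a. a \<in> I \<and> sup (fst p) a = sup (snd p) a)" for p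
    have f: "f p \<in> I \<and> sup (fst p) (f p) = sup (snd p) (f p)" if "p \<in> S" for p
    proof -
      have "\<exists>a. a \<in> I \<and> sup (fst p) a = sup (snd p) a" using S that unfolding CI_def by (cases p) auto
      then show ?thesis unfolding f_def by (rule someI_ex)
    qed
    obtain u where u: "u \<in> I" "\<forall>s\<in>f ` S. s \<le> u"
      using kideal_ub[OF I, of "f ` S"] kset_image[OF S(2)] f by blast
    have pu: "sup (fst p) u = sup (snd p) u" if "p \<in> S" for p
    proof -
      have fu: "f p \<le> u" using u that by auto
      have "sup (fst p) u = sup (sup (fst p) (f p)) u" using fu by (simp add: sup_assoc sup_absorb2)
      also have "\<dots> = sup (sup (snd p) (f p)) u" using f[OF that] by simp
      also have "\<dots> = sup (snd p) u" using fu by (simp add: sup_assoc sup_absorb2)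
      finally show ?thesis .
    qed
    have "y \<le> sup x u"
    proof -
      have "\<forall>s\<in>snd ` S. s \<le> sup x u"
      proof
        fix s assume "s \<in> snd ` S" then obtain p where p: "p \<in> S" "s = snd p" by auto
        have "fst p \<le> x" using lx p unfolding is_lub_def by auto
        then have "sup (fst p) u \<le> sup x u" by (simp add: le_supI1)
        then show "s \<le> sup x u" using pu[OF p(1)] p(2) by (metis sup.cobounded1 order_trans)
      qed
      then show ?thesis using ly unfolding is_lub_def by blast
    qed
    moreover have "x \<le> sup y u"
    proof -
      have "\<forall>s\<in>fst ` S. s \<le> sup y u"
      proof
        fix s assume "s \<in> fst ` S" then obtain p where p: "p \<in> S" "s = fst p" by auto
        have "snd p \<le> y" using ly p unfolding is_lub_def by auto
        then have "sup (snd p) u \<le> sup y u" by (simp add: le_supI1)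
        then show "s \<le> sup y u" using pu[OF p(1)] p(2) by (metis sup.cobounded1 order_trans)
      qed
      then show ?thesis using lx unfolding is_lub_def by blast
    qed
    ultimately have "sup x u = sup y u" by (simp add: antisym)
    then show "(x, y) \<in> CI I" unfolding CI_def using u(1) by auto
  qed
  have "equiv UNIV (CI I)" using refl sym trans by (simp add: equiv_def)
  moreover have "(bot, bot) \<in> CI I" "(top, top) \<in> CI I" using bI unfolding CI_def by auto
  ultimately show ?thesis unfolding congs_def mem_Collect_eq using meet joins by (intro conjI)
qed

lemma lub_in_eq: "is_lub_in F S X \<Longrightarrow> lub_in F S = X"
  unfolding lub_in_def
  by (rule the_equality) (auto simp: is_lub_in_def)

lemma nabla_sub_CI: "a \<in> I \<Longrightarrow> nabla a \<subseteq> CI I"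
  unfolding nabla_def CI_def by auto

lemma congs_equiv: "Z \<in> congs k \<Longrightarrow> equiv UNIV Z"
  unfolding congs_def by simp

lemma congs_inf:
  assumes "Z \<in> congs k" "(a,b) \<in> Z" "(c,d) \<in> Z"
  shows "(inf a c, inf b d) \<in> Z"
proof -
  have "\<forall>p\<in>Z. \<forall>q\<in>Z. (inf (fst p) (fst q), inf (snd p) (snd q)) \<in> Z"
    using assms(1) unfolding congs_def by simp
  then show ?thesis using assms(2,3) by fastforce
qed

lemma congs_join:
  assumes "Z \<in> congs k" "S \<subseteq> Z" "kset k S" "is_lub (fst ` S) x" "is_lub (snd ` S) y"
  shows "(x, y) \<in> Z"
proof -
  have "\<forall>S x y. S \<subseteq> Z \<longrightarrow> kset k S \<longrightarrow> is_lub (fst ` S) x \<longrightarrow> is_lub (snd ` S) y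
                      \<longrightarrow> (x, y) \<in> Z"
    using assms(1) unfolding congs_def by simp
  then show ?thesis using assms(2-5) by blast
qed

lemma equiv_refl': "equiv UNIV Z \<Longrightarrow> (x,x) \<in> Z"
  unfolding equiv_def refl_on_def by simp

lemma equiv_sym': "equiv UNIV Z \<Longrightarrow> (x,y) \<in> Z \<Longrightarrow> (y,x) \<in> Z"
  unfolding equiv_def by (meson symD)

lemma equiv_trans': "equiv UNIV Z \<Longrightarrow> (x,y) \<in> Z \<Longrightarrow> (y,z) \<in> Z \<Longrightarrow> (x,z) \<in> Z"
  unfolding equiv_def by (meson transD)

lemma cong_binjoin:
  fixes Z :: "('a::{bounded_lattice,distrib_lattice} \<times> 'a) set"
  assumes Z: "Z \<in> congs k" and C: "Cinfinite k" and p: "(a,b) \<in> Z" and q: "(c,d) \<in> Z"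
  shows "(sup a c, sup b d) \<in> Z"
proof -
  have "kset k {(a,b),(c,d)}" by (rule finite_kset[OF C]) simp
  moreover have "is_lub (fst ` {(a,b),(c,d)}) (sup a c)" "is_lub (snd ` {(a,b),(c,d)}) (sup b d)"
    unfolding is_lub_def by auto
  moreover have "{(a,b),(c,d)} \<subseteq> Z" using p q by simp
  ultimately show ?thesis using congs_join[OF Z] by blast
qed

lemma cong_nabla:
  fixes Z :: "('a::{bounded_lattice,distrib_lattice} \<times> 'a) set"
  assumes Z: "Z \<in> congs k" and C: "Cinfinite k" and a: "(bot, a) \<in> Z"
  shows "nabla a \<subseteq> Z"
proof
  fix p assume "p \<in> nabla a"
  then obtain x y where p: "p = (x,y)" "sup x a = sup y a" unfolding nabla_def by auto
  have eq: "equiv UNIV Z" using congs_equiv[OF Z] .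
  have "(sup x bot, sup x a) \<in> Z" using cong_binjoin[OF Z C equiv_refl'[OF eq] a] .
  moreover have "(sup y bot, sup y a) \<in> Z" using cong_binjoin[OF Z C equiv_refl'[OF eq] a] .
  ultimately have "(x, sup x a) \<in> Z" "(y, sup x a) \<in> Z" using p by auto
  then show "p \<in> Z" using equiv_trans'[OF eq] equiv_sym'[OF eq] p(1) by blast
qed

lemma cong_ideal:
  fixes Z :: "('a::{bounded_lattice,distrib_lattice} \<times> 'a) set"
  assumes Z: "Z \<in> congs k" and C: "Cinfinite k" and F: "kappa_frame k TYPE('a)"
  shows "{a. (bot, a) \<in> Z} \<in> kideals k"
  unfolding kideals_def
proof (safe)
  fix x y assume y: "(bot, y) \<in> Z" and xy: "x \<le> y"
  have "(inf bot x, inf y x) \<in> Z" using congs_inf[OF Z y equiv_refl'[OF congs_equiv[OF Z]]] .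
  then show "(bot, x) \<in> Z" using xy by (simp add: inf_absorb2)
next
  fix S assume S: "S \<subseteq> {a. (bot, a) \<in> Z}" "kset k S"
  obtain s where s: "is_lub S s" using F S(2) unfolding kappa_frame_def by blast
  let ?T = "(\<lambda>t. (bot::'a, t)) ` S"
  have "kset k ?T" using kset_image[OF S(2)] .
  moreover have "?T \<subseteq> Z" using S by auto
  moreover have "is_lub (fst ` ?T) bot" unfolding is_lub_def by auto
  moreover have "snd ` ?T = S" by force
  ultimately have "(bot, s) \<in> Z" using congs_join[OF Z] s by metis
  then show "\<exists>u\<in>{a. (bot, a) \<in> Z}. \<forall>s\<in>S. s \<le> u" using s unfolding is_lub_def by auto
qed

lemma nablaI_eq:
  fixes I :: "'a::{bounded_lattice,distrib_lattice} set"
  assumes I: "I \<in> kideals k" and C: "Cinfinite k"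
  shows "nablaI k I = CI I"
proof -
  have "is_lub_in (congs k) (nabla ` I) (CI I)"
    unfolding is_lub_in_def
  proof (intro conjI ballI impI)
    show "CI I \<in> congs k" using CI_congs[OF I C] .
  next
    fix Y assume "Y \<in> nabla ` I" then show "Y \<subseteq> CI I" using nabla_sub_CI by blast
  next
    fix Z assume Z: "Z \<in> congs k" "\<forall>Y\<in>nabla ` I. Y \<subseteq> Z"
    show "CI I \<subseteq> Z"
    proof
      fix p assume "p \<in> CI I"
      then obtain x y a where "p = (x,y)" "a \<in> I" "sup x a = sup y a" unfolding CI_def by auto
      then have "p \<in> nabla a" unfolding nabla_def by auto
      then show "p \<in> Z" using Z \<open>a \<in> I\<close> by blast
    qed
  qed
  then show ?thesis unfolding nablaI_def by (rule lub_in_eq)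
qed

lemma CI_mono: "I \<subseteq> J \<Longrightarrow> CI I \<subseteq> CI J"
  unfolding CI_def by blast

lemma bot_in_CI: "a \<in> I \<Longrightarrow> (bot::'a::bounded_lattice, a) \<in> CI I"
  unfolding CI_def by (auto intro!: bexI[of _ a])

lemma CI_bot: "I \<in> kideals k \<Longrightarrow> (bot::'a::bounded_lattice, a) \<in> CI I \<Longrightarrow> a \<in> I"
proof -
  assume I: "I \<in> kideals k" and "(bot::'a, a) \<in> CI I"
  then obtain b where b: "b \<in> I" "b = sup a b" unfolding CI_def by auto
  then have "sup a b = b" by simp
  then have "a \<le> b" by (simp add: le_iff_sup)
  then show "a \<in> I" using kideal_down[OF I b(1)] by blast
qed

theorem mainTheorem2:
  fixes k :: "'b rel"
  assumes "regular_cardinal k"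
    and "kappa_frame k TYPE('a::{bounded_lattice,distrib_lattice})"
  shows "frame_hom (kideals k :: 'a set set) (congs k) (nablaI k)
         \<and> inj_on (nablaI k) (kideals k :: 'a set set)"
proof -
  have C: "Cinfinite k" using assms(1) unfolding regular_cardinal_def by blast
  note F = assms(2)
  have into: "\<forall>X\<in>(kideals k :: 'a set set). nablaI k X \<in> congs k"
    using nablaI_eq CI_congs C by metis
  have joins: "\<forall>S J. S \<subseteq> (kideals k :: 'a set set) \<longrightarrow> is_lub_in (kideals k) S J
      \<longrightarrow> is_lub_in (congs k) (nablaI k ` S) (nablaI k J)"
  proof (intro allI impI)
    fix S and J :: "'a set" assume S: "S \<subseteq> kideals k" and J: "is_lub_in (kideals k) S J"
    have Jk: "J \<in> kideals k" using J unfolding is_lub_in_def by blast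
    have eqJ: "nablaI k J = CI J" using nablaI_eq[OF Jk C] .
    have eqS: "nablaI k ` S = CI ` S" using nablaI_eq[OF _ C] S by (auto simp: image_iff subset_iff)
    show "is_lub_in (congs k) (nablaI k ` S) (nablaI k J)"
      unfolding eqJ eqS is_lub_in_def
    proof (intro conjI ballI impI)
      show "CI J \<in> congs k" using CI_congs[OF Jk C] .
    next
      fix Y assume "Y \<in> CI ` S"
      then show "Y \<subseteq> CI J" using J CI_mono unfolding is_lub_in_def by blast
    next
      fix Z assume Z: "Z \<in> congs k" "\<forall>Y\<in>CI ` S. Y \<subseteq> Z"
      let ?K = "{a. (bot, a) \<in> Z}"
      have Kk: "?K \<in> kideals k" using cong_ideal[OF Z(1) C F] .
      have "\<forall>I\<in>S. I \<subseteq> ?K" using Z(2) bot_in_CI by blast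
      then have JK: "J \<subseteq> ?K" using J Kk unfolding is_lub_in_def by blast
      show "CI J \<subseteq> Z"
      proof
        fix p assume "p \<in> CI J"
        then obtain x y a where p: "p = (x,y)" "a \<in> J" "sup x a = sup y a" unfolding CI_def by auto
        then have "p \<in> nabla a" unfolding nabla_def by auto
        moreover have "nabla a \<subseteq> Z" using cong_nabla[OF Z(1) C] JK p(2) by blast
        ultimately show "p \<in> Z" by blast
      qed
    qed
  qed
  have meets: "\<forall>X\<in>(kideals k :: 'a set set). \<forall>Y\<in>kideals k. \<forall>M. is_glb_in (kideals k) {X, Y} M
      \<longrightarrow> is_glb_in (congs k) {nablaI k X, nablaI k Y} (nablaI k M)"
  proof (intro ballI allI impI)
    fix X Y M :: "'a set" assume X: "X \<in> kideals k" and Y: "Y \<in> kideals k"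
      and M: "is_glb_in (kideals k) {X, Y} M"
    have Mk: "M \<in> kideals k" using M unfolding is_glb_in_def by blast
    have XY: "X \<inter> Y \<in> kideals k"
      unfolding kideals_def
    proof (safe)
      fix x y assume "y \<in> X" "x \<le> y" then show "x \<in> X" using kideal_down[OF X] by blast
    next
      fix x y assume "y \<in> Y" "x \<le> y" then show "x \<in> Y" using kideal_down[OF Y] by blast
    next
      fix S assume S: "S \<subseteq> X \<inter> Y" "kset k S"
      obtain u where u: "u \<in> X" "\<forall>s\<in>S. s \<le> u" using kideal_ub[OF X, of S] S by blast
      obtain v where v: "v \<in> Y" "\<forall>s\<in>S. s \<le> v" using kideal_ub[OF Y, of S] S by blast
      have "inf u v \<in> X" "inf u v \<in> Y" using kideal_down[OF X] kideal_down[OF Y] u v by auto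
      then show "\<exists>w\<in>X \<inter> Y. \<forall>s\<in>S. s \<le> w" using u v by (intro bexI[of _ "inf u v"]) (auto simp: le_inf_iff)
    qed
    have XYM: "X \<inter> Y \<subseteq> M" using M XY unfolding is_glb_in_def by blast
    show "is_glb_in (congs k) {nablaI k X, nablaI k Y} (nablaI k M)"
      unfolding nablaI_eq[OF X C] nablaI_eq[OF Y C] nablaI_eq[OF Mk C] is_glb_in_def
    proof (intro conjI ballI impI)
      show "CI M \<in> congs k" using CI_congs[OF Mk C] .
    next
      fix Z assume "Z \<in> {CI X, CI Y}"
      then show "CI M \<subseteq> Z" using M CI_mono unfolding is_glb_in_def by blast
    next
      fix Z assume Z: "Z \<in> congs k" "\<forall>W\<in>{CI X, CI Y}. Z \<subseteq> W"
      show "Z \<subseteq> CI M"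
      proof
        fix p assume p: "p \<in> Z"
        obtain x y where xy: "p = (x,y)" by fastforce
        have "p \<in> CI X" "p \<in> CI Y" using Z(2) p by auto
        then obtain a b where a: "a \<in> X" "sup x a = sup y a" and b: "b \<in> Y" "sup x b = sup y b"
          unfolding CI_def xy by auto
        have "sup x (inf a b) = inf (sup x a) (sup x b)" by (simp add: sup_inf_distrib1)
        also have "\<dots> = sup y (inf a b)" using a b by (simp add: sup_inf_distrib1)
        finally have E: "sup x (inf a b) = sup y (inf a b)" .
        have "inf a b \<in> X" by (rule kideal_down[OF X a(1)]) simp
        moreover have "inf a b \<in> Y" by (rule kideal_down[OF Y b(1)]) simp
        ultimately have "inf a b \<in> M" using XYM by blast
        then show "p \<in> CI M" unfolding CI_def xy using E by blast
      qed
    qed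
  qed
  have topk: "UNIV \<in> (kideals k :: 'a set set)"
    unfolding kideals_def by (simp, intro allI impI exI[of _ top], simp)
  have topc: "UNIV \<in> (congs k :: ('a \<times> 'a) set set)"
    unfolding congs_def by (simp add: equiv_def refl_on_def sym_def trans_def)
  have tops: "\<forall>T. is_glb_in (kideals k :: 'a set set) {} T \<longrightarrow> is_glb_in (congs k) {} (nablaI k T)"
  proof (intro allI impI)
    fix T :: "'a set" assume T: "is_glb_in (kideals k) {} T"
    then have "T = UNIV" using topk unfolding is_glb_in_def by blast
    moreover have "CI (UNIV::'a set) = UNIV" unfolding CI_def
      by (auto intro!: exI[where x=top])
    ultimately have "nablaI k T = UNIV" using nablaI_eq[OF topk C] by simp
    then show "is_glb_in (congs k) {} (nablaI k T)" using topc unfolding is_glb_in_def by simp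
  qed
  have inj: "inj_on (nablaI k) (kideals k :: 'a set set)"
  proof (rule inj_onI)
    fix I J :: "'a set" assume I: "I \<in> kideals k" and J: "J \<in> kideals k" and e: "nablaI k I = nablaI k J"
    then have e': "CI I = CI J" using nablaI_eq C by metis
    show "I = J" using CI_bot[OF I] CI_bot[OF J] bot_in_CI e' by blast
  qed
  have "frame_hom (kideals k :: 'a set set) (congs k) (nablaI k)"
    unfolding frame_hom_def by (intro conjI into joins meets tops)
  then show ?thesis using inj by (rule conjI)
qed

end
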